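(* Let $\mathcal{X}_g^*\triangleq \operatorname*{arg\,min}_{\mathbf{z}\in \mathcal{Z}} g(\mathbf{z})$ be the solution set of the lower-level problem and let $\mathcal{X}_k \triangleq \mathcal{Z} \cap \{\mathbf{s}\in\mathbb{R}^d \mid \langle \nabla g(\mathbf{x}_k), \mathbf{s}-\mathbf{x}_k\rangle \leq g(\mathbf{x}_0)-g(\mathbf{x}_k)\}$. Then for any $k\geq 0$, $\mathcal{X}^*_g \subseteq \mathcal{X}_k$.
   Context: Consider the simple bilevel problem $\min_{\mathbf{x}\in\mathbb{R}^d} f(\mathbf{x})$ s.t. $\mathbf{x}\in \operatorname*{arg\,min}_{\mathbf{z}\in\mathcal{Z}} g(\mathbf{z})$, where $\mathcal{Z}\subset\mathbb{R}^d$ is compact and convex and $g$ is convex and continuously differentiable on an open set containing $\mathcal{Z}$. Let $g^*=\min_{\mathbf{z}\in\mathcal{Z}} g(\mathbf{z})$. The points $\mathbf{x}_0,\mathbf{x}_1,\dots$ are iterates in $\mathcal{Z}$ (generated by the CG-BiO algorithm: $\mathbf{x}_0\in\mathcal{Z}$ with $g(\mathbf{x}_0)-g^*\le\epsilon_g/2$, $\mathbf{s}_k\in\operatorname*{arg\,min}_{\mathbf{s}\in\mathcal{X}_k}\langle\nabla f(\mathbf{x}_k),\mathbf{s}\rangle$, $\mathbf{x}_{k+1}=(1-\gamma_k)\mathbf{x}_k+\gamma_k\mathbf{s}_k$ with $\gamma_k\in[0,1]$). *)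

theory Defs
  imports "HOL-Analysis.Analysis"
begin

definition lower_sol_set :: "('a \<Rightarrow> real) \<Rightarrow> 'a set \<Rightarrow> 'a set" where
  "lower_sol_set g Z = {z \<in> Z. \<forall>y\<in>Z. g z \<le> g y}"

definition cut_set :: "'a set \<Rightarrow> ('a \<Rightarrow> real) \<Rightarrow> ('a::real_inner \<Rightarrow> 'a) \<Rightarrow> 'a \<Rightarrow> 'a \<Rightarrow> 'a set" where
  "cut_set Z g G x0 xk = Z \<inter> {s. G xk \<bullet> (s - xk) \<le> g x0 - g xk}"

end

theory Submission
  imports Defs
begin

theorem lemma1:
  fixes Z :: "'a::euclidean_space set"
    and f g :: "'a \<Rightarrow> real" and F G :: "'a \<Rightarrow> 'a"
    and U :: "'a set" and x s :: "nat \<Rightarrow> 'a" and \<gamma> :: "nat \<Rightarrow> real"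
    and eps_g :: real and k :: nat
  assumes Zcompact: "compact Z" and Zconvex: "convex Z"
    and Uopen: "open U" and ZU: "Z \<subseteq> U"
    and gconv: "convex_on U g"
    and gderiv: "\<And>z. z \<in> U \<Longrightarrow> (g has_derivative (\<lambda>h. G z \<bullet> h)) (at z)"
    and Gcont: "continuous_on U G"
    and fderiv: "\<And>z. (f has_derivative (\<lambda>h. F z \<bullet> h)) (at z)"
    and x0: "x 0 \<in> Z"
    and x0_eps: "g (x 0) - (INF z\<in>Z. g z) \<le> eps_g / 2"
    and s_min: "\<And>j. s j \<in> cut_set Z g G (x 0) (x j) \<and>
                    (\<forall>y\<in>cut_set Z g G (x 0) (x j). F (x j) \<bullet> s j \<le> F (x j) \<bullet> y)"
    and gamma: "\<And>j. 0 \<le> \<gamma> j \<and> \<gamma> j \<le> 1"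
    and step: "\<And>j. x (Suc j) = (1 - \<gamma> j) *\<^sub>R x j + \<gamma> j *\<^sub>R s j"
  shows "lower_sol_set g Z \<subseteq> cut_set Z g G (x 0) (x k)"
proof
  fix z assume zs: "z \<in> lower_sol_set g Z"
  hence zZ: "z \<in> Z" and zmin: "\<And>y. y \<in> Z \<Longrightarrow> g z \<le> g y"
    unfolding lower_sol_set_def by auto
  have xZ: "x j \<in> Z" for j
  proof (induction j)
    case 0 then show ?case using x0 .
  next
    case (Suc j)
    have "s j \<in> Z" using s_min[of j] unfolding cut_set_def by auto
    then show ?case using Suc gamma[of j] step[of j] Zconvex
      by (simp add: convexD)
  qed
  define xk where "xk = x k"
  define d where "d = z - xk"
  define A where "A = {t::real. xk + t *\<^sub>R d \<in> U}"
  define phi where "phi = (\<lambda>t::real. g (xk + t *\<^sub>R d))"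
  have Uconv: "convex U" using gconv unfolding convex_on_def by auto
  have aff: "u *\<^sub>R (xk + t1 *\<^sub>R d) + v *\<^sub>R (xk + t2 *\<^sub>R d) = xk + (u * t1 + v * t2) *\<^sub>R d"
    if "u + v = 1" for u v t1 t2 :: real
  proof -
    have "u *\<^sub>R (xk + t1 *\<^sub>R d) + v *\<^sub>R (xk + t2 *\<^sub>R d) = (u + v) *\<^sub>R xk + (u * t1 + v * t2) *\<^sub>R d"
      by (simp add: algebra_simps)
    then show ?thesis using that by simp
  qed
  have Aconv: "convex A"
    unfolding convex_def A_def
  proof (intro ballI allI impI, simp)
    fix t1 t2 u v :: real
    assume h: "xk + t1 *\<^sub>R d \<in> U" "xk + t2 *\<^sub>R d \<in> U" "0 \<le> u" "0 \<le> v" "u + v = 1"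
    have "u *\<^sub>R (xk + t1 *\<^sub>R d) + v *\<^sub>R (xk + t2 *\<^sub>R d) \<in> U"
      using Uconv h by (simp add: convexD)
    then show "xk + (u * t1 + v * t2) *\<^sub>R d \<in> U" using aff[OF h(5)] by simp
  qed
  have phiconv: "convex_on A phi"
    unfolding convex_on_def
  proof (intro conjI Aconv ballI allI impI)
    fix t1 t2 u v :: real
    assume h: "t1 \<in> A" "t2 \<in> A" "0 \<le> u" "0 \<le> v" "u + v = 1"
    have "g (u *\<^sub>R (xk + t1 *\<^sub>R d) + v *\<^sub>R (xk + t2 *\<^sub>R d)) \<le> u * g (xk + t1 *\<^sub>R d) + v * g (xk + t2 *\<^sub>R d)"
      using gconv h unfolding convex_on_def A_def by blast
    then show "phi (u *\<^sub>R t1 + v *\<^sub>R t2) \<le> u * phi t1 + v * phi t2"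
      unfolding phi_def using aff[OF h(5)] by simp
  qed
  have xkU: "xk \<in> U" using xZ[of k] ZU unfolding xk_def by auto
  have Aopen: "open A"
  proof -
    have "A = (\<lambda>t. xk + t *\<^sub>R d) -` U" unfolding A_def by auto
    moreover have "continuous_on UNIV (\<lambda>t::real. xk + t *\<^sub>R d)"
      by (intro continuous_intros)
    ultimately show ?thesis using Uopen by (simp add: open_vimage)
  qed
  have A0: "0 \<in> A" and A1: "1 \<in> A" using xkU zZ ZU unfolding A_def d_def by auto
  have deriv: "(phi has_field_derivative (G xk \<bullet> d)) (at 0 within A)"
  proof -
    have l: "((\<lambda>t::real. xk + t *\<^sub>R d) has_derivative (\<lambda>t. t *\<^sub>R d)) (at 0)"
      by (auto intro!: derivative_eq_intros)
    have gd: "(g has_derivative (\<lambda>h. G xk \<bullet> h)) (at (xk + 0 *\<^sub>R d))"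
      using gderiv[OF xkU] by simp
    have "(phi has_derivative (\<lambda>t. G xk \<bullet> (t *\<^sub>R d))) (at 0)"
      unfolding phi_def using has_derivative_compose[OF l gd] by (simp add: o_def)
    then have "(phi has_derivative (*) (G xk \<bullet> d)) (at 0)"
      by (rule has_derivative_eq_rhs) (auto simp: mult.commute)
    then show ?thesis unfolding has_field_derivative_def
      by (rule has_derivative_at_withinI)
  qed
  have "phi 1 - phi 0 \<ge> (G xk \<bullet> d) * (1 - 0)"
    by (rule convex_on_imp_above_tangent[OF phiconv convex_connected[OF Aconv]])
       (use A0 A1 Aopen deriv interior_open in auto)
  then have "G xk \<bullet> d \<le> g z - g xk" unfolding phi_def d_def by simp
  moreover have "g z \<le> g (x 0)" using zmin x0 by auto
  ultimately show "z \<in> cut_set Z g G (x 0) (x k)"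
    unfolding cut_set_def using zZ xk_def d_def by auto
qed

end
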